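(* Let $x\in(0,1)$ be irrational with regular continued fraction $x=[0;d_1,d_2,\dots]$, and let $\tau=G^2(x)=[0;d_3,d_4,\dots]$. Then: (i) if $d_1$ is odd and $\tau\in[\frac12,1)$, the OOCF expansion of $x$ begins with $(2,-1)$ repeated $\frac{d_1-1}{2}$ times followed by $(d_2+1,1)$, and $T^{\frac{d_1-1}{2}+1}(x)=F(\tau)$; (ii) if $d_1$ is odd and $\tau\in[0,\frac12)$, the OOCF expansion of $x$ begins with $(2,-1)$ repeated $\frac{d_1-1}{2}$ times followed by $(d_2+2,-1)$, and $T^{\frac{d_1-1}{2}+1}(x)=F(\tau)$; (iii) if $d_1$ is even, the OOCF expansion of $x$ begins with $(2,-1)$ repeated $\frac{d_1}{2}-1$ times followed by $(1,1)$, and $T^{\frac{d_1}{2}}(x)=G(x)$.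
   Context: $[0;d_1,d_2,\dots]=\cfrac{1}{d_1+\cfrac{1}{d_2+\cdots}}$ is the regular continued fraction. Gauss map $G(x)=\{1/x\}$ (fractional part) for $x\in(0,1]$, $G(0)=0$. Farey map $F(x)=\frac{x}{1-x}$ for $0\le x\le\frac12$, $F(x)=\frac{1-x}{x}$ for $\frac12\le x\le1$. OOCF: digits $D=\{(1,1)\}\cup\{(a,\varepsilon):a\ge2,\ \varepsilon=\pm1\}$; $B(k+1,-1)=[\frac{k-1}{k},\frac{2k-1}{2k+1}]$, $B(k,1)=[\frac{2k-1}{2k+1},\frac{k}{k+1}]$ ($k\ge1$); the OOCF map is $T(x)=\frac{kx-(k-1)}{k-(k+1)x}$ on $B(k+1,-1)$, $T(x)=\frac{k-(k+1)x}{kx-(k-1)}$ on $B(k,1)$, $T(1)=1$. The OOCF expansion of irrational $x\in(0,1)$ is the unique sequence $(a_n,\varepsilon_n)\in D$ with $T^{n-1}(x)\in B(a_n,\varepsilon_n)$ for all $n\ge1$. *)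

theory Defs
  imports Complex_Main
begin

definition gauss_map :: "real \<Rightarrow> real" where
  "gauss_map x = (if x = 0 then 0 else frac (1 / x))"

definition farey_map :: "real \<Rightarrow> real" where
  "farey_map x = (if x \<le> 1/2 then x / (1 - x) else (1 - x) / x)"

definition cf_digit :: "real \<Rightarrow> nat \<Rightarrow> nat" where
  "cf_digit x n = nat \<lfloor>1 / (gauss_map ^^ (n - 1)) x\<rfloor>"

definition oocf_D :: "(nat \<times> int) set" where
  "oocf_D = {(1, 1)} \<union> {(a, e). a \<ge> 2 \<and> (e = 1 \<or> e = -1)}"

text \<open>Cylinder intervals: B(k+1,-1) = [(k-1)/k, (2k-1)/(2k+1)], B(k,1) = [(2k-1)/(2k+1), k/(k+1)].\<close>
definition oocf_B :: "nat \<times> int \<Rightarrow> real set" where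
  "oocf_B d = (case d of (a, e) \<Rightarrow>
     (if e = -1 then {(real a - 2) / (real a - 1) .. (2 * real a - 3) / (2 * real a - 1)}
      else {(2 * real a - 1) / (2 * real a + 1) .. real a / (real a + 1)}))"

text \<open>The OOCF map T (branches agree at common endpoints).\<close>
definition oocf_T :: "real \<Rightarrow> real" where
  "oocf_T x =
    (if x = 1 then 1
     else if \<exists>k::nat. k \<ge> 1 \<and> x \<in> oocf_B (k + 1, -1) then
       (let k = real (SOME k::nat. k \<ge> 1 \<and> x \<in> oocf_B (k + 1, -1))
        in (k * x - (k - 1)) / (k - (k + 1) * x))
     else
       (let k = real (SOME k::nat. k \<ge> 1 \<and> x \<in> oocf_B (k, 1))
        in (k - (k + 1) * x) / (k * x - (k - 1))))"

text \<open>The OOCF expansion: the unique sequence of digits in D with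
  T^(n-1)(x) \<in> B(a_n, e_n) for all n \<ge> 1. Indexed from 0 here:
  oocf_expansion x n = (a_(n+1), e_(n+1)).\<close>
definition oocf_expansion :: "real \<Rightarrow> nat \<Rightarrow> nat \<times> int" where
  "oocf_expansion x =
     (THE s. \<forall>n. s n \<in> oocf_D \<and> (oocf_T ^^ n) x \<in> oocf_B (s n))"

end

theory Submission
  imports Defs
begin



definition pp :: "nat \<Rightarrow> real" where "pp n = real n / (real n + 2)"
definition idx :: "nat \<times> int \<Rightarrow> nat" where
  "idx d = (case d of (a, e) \<Rightarrow> if e = -1 then 2*a - 3 else 2*a)"

lemma pp_rat: "pp n \<in> \<rat>" unfolding pp_def by simp

lemma pp_mono: "n \<le> m \<Longrightarrow> pp n \<le> pp m"
  unfolding pp_def by (simp add: field_simps)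

lemma D_cases:
  assumes "d \<in> oocf_D"
  obtains "d = (1,1)" | a where "a \<ge> 2" "d = (a,-1)" | a where "a \<ge> 2" "d = (a,1)"
  using assms unfolding oocf_D_def by auto

lemma B_idx:
  assumes "d \<in> oocf_D"
  shows "oocf_B d = {pp (idx d - 1) .. pp (idx d)} \<and> idx d \<ge> 1"
  using assms
proof (cases rule: D_cases)
  case 1 then show ?thesis by (simp add: oocf_B_def idx_def pp_def)
next
  case (2 a)
  have e1: "real (2*a - 3 - 1) = 2 * real a - 4" using 2 by (simp add: of_nat_diff)
  have e2: "real (2*a - 3) = 2 * real a - 3" using 2 by (simp add: of_nat_diff)
  have "(real a - 2) / (real a - 1) = (2 * real a - 4) / (2 * real a - 4 + 2)"
    using 2 by (simp add: field_simps)
  moreover have "(2 * real a - 3) / (2 * real a - 1) = (2 * real a - 3) / (2 * real a - 3 + 2)"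
    by simp
  ultimately have "oocf_B d = {pp (idx d - 1) .. pp (idx d)}" using 2 e1 e2 unfolding oocf_B_def idx_def pp_def by simp
  moreover have "idx d \<ge> 1" using 2 by (simp add: idx_def)
  ultimately show ?thesis by blast
next
  case (3 a)
  have e1: "real (2*a - 1) = 2 * real a - 1" using 3 by (simp add: of_nat_diff)
  have "real a / (real a + 1) = (2 * real a) / (2 * real a + 2)"
    using 3 by (simp add: field_simps)
  then show ?thesis using 3 e1 by (simp add: oocf_B_def idx_def pp_def)
qed




lemma idx_inj:
  assumes "d \<in> oocf_D" "d' \<in> oocf_D" "idx d = idx d'" shows "d = d'"
proof -
  obtain a e where d: "d = (a,e)" "(a = 1 \<and> e = 1) \<or> (a \<ge> 2 \<and> (e = 1 \<or> e = -1))"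
    using assms(1) unfolding oocf_D_def by auto
  obtain a' e' where d': "d' = (a',e')" "(a' = 1 \<and> e' = 1) \<or> (a' \<ge> 2 \<and> (e' = 1 \<or> e' = -1))"
    using assms(2) unfolding oocf_D_def by auto
  have i: "(if e = -1 then 2*a - 3 else 2*a) = (if e' = -1 then 2*a' - 3 else 2*a')"
    using assms(3) d d' by (simp add: idx_def)
  have "a = a' \<and> e = e'"
  proof (cases "e = -1")
    case True
    then have ee: "e = -1" "a \<ge> 2" using d by auto
    show ?thesis
    proof (cases "e' = -1")
      case True then show ?thesis using i ee d' by auto
    next
      case False then have "e' = 1" using d' by auto
      then have h: "2*a - 3 = 2*a'" using i ee False by simp
      have False using h ee(2) by presburger
      then show ?thesis ..
    qed
  next
    case False
    then have ee: "e = 1" using d by auto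
    show ?thesis
    proof (cases "e' = -1")
      case True then have h: "2*a = 2*a' - 3" "a' \<ge> 2" using i ee d' by auto
      have False using h by presburger
      then show ?thesis ..
    next
      case False then have "e' = 1" using d' by auto
      then show ?thesis using i ee False by simp
    qed
  qed
  then show ?thesis using d d' by simp
qed




lemma B_unique:
  assumes "y \<notin> \<rat>" "d \<in> oocf_D" "d' \<in> oocf_D" "y \<in> oocf_B d" "y \<in> oocf_B d'"
  shows "d = d'"
proof -
  have m: "oocf_B d = {pp (idx d - 1) .. pp (idx d)}" "idx d \<ge> 1" using B_idx[OF assms(2)] by blast+
  have m': "oocf_B d' = {pp (idx d' - 1) .. pp (idx d')}" "idx d' \<ge> 1" using B_idx[OF assms(3)] by blast+
  have ne: "y \<noteq> pp n" for n using assms(1) pp_rat by metis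
  have s: "pp (idx d-1) < y" "y < pp (idx d)" "pp (idx d'-1) < y" "y < pp (idx d')"
    using assms(4,5) m m' ne by (auto simp: order_le_less)
  have "idx d = idx d'"
  proof (rule ccontr)
    assume "idx d \<noteq> idx d'"
    then have "idx d \<le> idx d' - 1 \<or> idx d' \<le> idx d - 1" by arith
    then show False
    proof
      assume "idx d \<le> idx d' - 1"
      then have "pp (idx d) \<le> pp (idx d' - 1)" by (rule pp_mono)
      then show False using s by linarith
    next
      assume "idx d' \<le> idx d - 1"
      then have "pp (idx d') \<le> pp (idx d - 1)" by (rule pp_mono)
      then show False using s by linarith
    qed
  qed
  then show ?thesis using idx_inj assms(2,3) by blast
qed

lemma B_exists:
  assumes "0 < y" "y < 1"
  shows "\<exists>d\<in>oocf_D. y \<in> oocf_B d"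
proof -
  define r where "r = 2*y/(1-y)"
  have r0: "r \<ge> 0" using assms unfolding r_def by simp
  define n where "n = nat \<lfloor>r\<rfloor>"
  have fl: "real n \<le> r" "r < real n + 1"
    using r0 unfolding n_def by (simp_all add: of_nat_nat)
  have l: "pp n \<le> y" using fl(1) assms unfolding pp_def r_def by (simp add: field_simps)
  have u: "y \<le> pp (n+1)" using fl(2) assms unfolding pp_def r_def by (simp add: field_simps)
  show ?thesis
  proof (cases "even (n+1)")
    case True
    then obtain k where k: "n + 1 = 2*k" by blast
    then have "k \<ge> 1" by auto
    then have kd: "(k,1) \<in> oocf_D" unfolding oocf_D_def by auto
    moreover have "idx (k,1) = n+1" using k by (simp add: idx_def)
    ultimately have "oocf_B (k,1) = {pp n .. pp (n+1)}" using B_idx[OF kd] by simp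
    then show ?thesis using kd l u by auto
  next
    case False
    then obtain k where k: "n + 1 = 2*k+1" by (metis oddE)
    have kd: "(k+2,-1) \<in> oocf_D" unfolding oocf_D_def by auto
    moreover have "idx (k+2,-1) = n+1" using k by (simp add: idx_def)
    ultimately have "oocf_B (k+2,-1) = {pp n .. pp (n+1)}" using B_idx[OF kd] by simp
    then show ?thesis using kd l u by auto
  qed
qed




lemma T_minus:
  assumes "k \<ge> 1" "y \<notin> \<rat>" "y \<in> oocf_B (k+1, -1)"
  shows "oocf_T y = (real k * y - (real k - 1)) / (real k - (real k + 1) * y)"
proof -
  have y1: "y \<noteq> 1" using assms(2) by auto
  have ex: "\<exists>k::nat. k \<ge> 1 \<and> y \<in> oocf_B (k + 1, -1)" using assms by blast
  have sm: "(SOME k::nat. k \<ge> 1 \<and> y \<in> oocf_B (k + 1, -1)) = k"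
  proof (rule some_equality)
    show "k \<ge> 1 \<and> y \<in> oocf_B (k + 1, -1)" using assms by blast
  next
    fix k' :: nat assume h: "k' \<ge> 1 \<and> y \<in> oocf_B (k' + 1, -1)"
    have "(k'+1, -1) \<in> oocf_D" "(k+1,-1) \<in> oocf_D" using h assms(1) unfolding oocf_D_def by auto
    then have "(k'+1, -1::int) = (k+1,-1)" using B_unique[OF assms(2)] h assms(3) by blast
    then show "k' = k" by simp
  qed
  show ?thesis unfolding oocf_T_def using y1 ex sm by (simp add: Let_def)
qed

lemma T_plus:
  assumes "k \<ge> 1" "y \<notin> \<rat>" "y \<in> oocf_B (k, 1)"
  shows "oocf_T y = (real k - (real k + 1) * y) / (real k * y - (real k - 1))"
proof -
  have y1: "y \<noteq> 1" using assms(2) by auto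
  have kD: "(k,1) \<in> oocf_D" using assms(1) unfolding oocf_D_def by auto
  have nex: "\<not> (\<exists>k'::nat. k' \<ge> 1 \<and> y \<in> oocf_B (k' + 1, -1))"
  proof
    assume "\<exists>k'::nat. k' \<ge> 1 \<and> y \<in> oocf_B (k' + 1, -1)"
    then obtain k' where h: "k' \<ge> 1" "y \<in> oocf_B (k' + 1, -1)" by blast
    have "(k'+1, -1) \<in> oocf_D" using h unfolding oocf_D_def by auto
    then have "(k'+1, -1::int) = (k,1)" using B_unique[OF assms(2) _ kD] h assms(3) by blast
    then show False by simp
  qed
  have sm: "(SOME k::nat. k \<ge> 1 \<and> y \<in> oocf_B (k, 1)) = k"
  proof (rule some_equality)
    show "k \<ge> 1 \<and> y \<in> oocf_B (k, 1)" using assms by blast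
  next
    fix k' :: nat assume h: "k' \<ge> 1 \<and> y \<in> oocf_B (k', 1)"
    have "(k', 1) \<in> oocf_D" using h unfolding oocf_D_def by auto
    then have "(k', 1::int) = (k,1)" using B_unique[OF assms(2) _ kD] h assms(3) by blast
    then show "k' = k" by simp
  qed
  show ?thesis
    apply (subst oocf_T_def)
    apply (simp only: if_not_P[OF y1] if_not_P[OF nex] Let_def sm)
    done
qed

lemma minus_props:
  fixes k y :: real
  assumes "k \<ge> 1" "k \<in> \<rat>" "y \<notin> \<rat>" "(k-1)/k < y" "y < (2*k-1)/(2*k+1)"
  shows "0 < (k * y - (k - 1)) / (k - (k + 1) * y) \<and> (k * y - (k - 1)) / (k - (k + 1) * y) < 1
     \<and> (k * y - (k - 1)) / (k - (k + 1) * y) \<notin> \<rat>"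
proof -
  have n: "k * y - (k - 1) > 0" using assms(1,4) by (simp add: field_simps)
  have a: "(2*k+1) * y < 2*k-1" using assms(1,5) by (simp add: field_simps)
  have y1: "y < 1"
  proof (rule ccontr)
    assume "\<not> y < 1"
    then have "(2*k+1)*y \<ge> (2*k+1)*1" using assms(1) by (intro mult_left_mono) auto
    then show False using a by simp
  qed
  have "2*((k+1)*y) = (2*k+1)*y + y" by (simp add: algebra_simps)
  then have d: "k - (k + 1) * y > 0" using a y1 by linarith
  have lt: "k * y - (k - 1) < k - (k + 1) * y" using a by (simp add: algebra_simps)
  define q where "q = (k * y - (k - 1)) / (k - (k + 1) * y)"
  have q0: "q > 0" using n d unfolding q_def by simp
  have "q \<notin> \<rat>"
  proof
    assume qr: "q \<in> \<rat>"
    have "q * (k - (k + 1) * y) = k * y - (k - 1)" using d unfolding q_def by simp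
    then have e: "y * (k + q*(k+1)) = q*k + k - 1" by (simp add: algebra_simps)
    have pos: "k + q*(k+1) > 0" using q0 assms(1) by (simp add: add_pos_pos)
    have "y = (q*k + k - 1) / (k + q*(k+1))" using e pos by (simp add: field_simps)
    moreover have "(q*k + k - 1) / (k + q*(k+1)) \<in> \<rat>" using qr assms(2) by simp
    ultimately show False using assms(3) by simp
  qed
  then show ?thesis using q0 n d lt unfolding q_def by simp
qed

lemma plus_props:
  fixes k y :: real
  assumes "k \<ge> 1" "k \<in> \<rat>" "y \<notin> \<rat>" "(2*k-1)/(2*k+1) < y" "y < k/(k+1)"
  shows "0 < (k - (k + 1) * y) / (k * y - (k - 1)) \<and> (k - (k + 1) * y) / (k * y - (k - 1)) < 1
     \<and> (k - (k + 1) * y) / (k * y - (k - 1)) \<notin> \<rat>"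
proof -
  have n: "k - (k + 1) * y > 0" using assms(1,5) by (simp add: field_simps)
  have a: "(2*k+1) * y > 2*k-1" using assms(1,4) by (simp add: field_simps)
  have d: "k * y - (k - 1) > 0" using a assms(1)
  proof -
    have "(2*k+1) * (k*y - (k-1)) = k * ((2*k+1)*y) - (2*k+1)*(k-1)" by (simp add: algebra_simps)
    also have "\<dots> > k*(2*k-1) - (2*k+1)*(k-1)" using a assms(1) by simp
    also have "k*(2*k-1) - (2*k+1)*(k-1) = 1" by (simp add: algebra_simps)
    finally have "(2*k+1) * (k*y - (k-1)) > 0" by linarith
    then show ?thesis using assms(1) by (simp add: zero_less_mult_iff)
  qed
  have lt: "k - (k + 1) * y < k * y - (k - 1)" using a by (simp add: algebra_simps)
  define q where "q = (k - (k + 1) * y) / (k * y - (k - 1))"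
  have q0: "q > 0" using n d unfolding q_def by simp
  have "q \<notin> \<rat>"
  proof
    assume qr: "q \<in> \<rat>"
    have "q * (k * y - (k - 1)) = k - (k + 1) * y" using d unfolding q_def by simp
    then have e: "y * (q*k + k + 1) = k + q*k - q" by (simp add: algebra_simps)
    have pos: "q*k + k + 1 > 0" using q0 assms(1) by (simp add: add_pos_pos)
    have "y = (k + q*k - q) / (q*k + k + 1)" using e pos by (simp add: field_simps)
    moreover have "(k + q*k - q) / (q*k + k + 1) \<in> \<rat>" using qr assms(2) by simp
    ultimately show False using assms(3) by simp
  qed
  then show ?thesis using q0 n d lt unfolding q_def by simp
qed




lemma plus_case:
  assumes "k \<ge> 1" "y \<notin> \<rat>" "y \<in> oocf_B (k, 1)"
  shows "0 < oocf_T y \<and> oocf_T y < 1 \<and> oocf_T y \<notin> \<rat>"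
proof -
  have b: "(2*real k-1)/(2*real k+1) \<le> y" "y \<le> real k/(real k+1)"
    using assms(3) by (auto simp: oocf_B_def)
  have r1: "(2*real k-1)/(2*real k+1) \<in> \<rat>" "real k/(real k+1) \<in> \<rat>" by simp_all
  have s: "(2*real k-1)/(2*real k+1) < y" "y < real k/(real k+1)"
    using b r1 assms(2) by (metis order_le_less)+
  show ?thesis using T_plus[OF assms] plus_props[of "real k" y] s assms by simp
qed

lemma minus_case:
  assumes "k \<ge> 1" "y \<notin> \<rat>" "y \<in> oocf_B (k+1, -1)"
  shows "0 < oocf_T y \<and> oocf_T y < 1 \<and> oocf_T y \<notin> \<rat>"
proof -
  have e: "(real (k+1) - 2) / (real (k+1) - 1) = (real k - 1)/real k"
          "(2 * real (k+1) - 3) / (2 * real (k+1) - 1) = (2*real k - 1)/(2*real k + 1)"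
    by (simp_all add: algebra_simps)
  have b: "(real k-1)/real k \<le> y" "y \<le> (2*real k-1)/(2*real k+1)"
    using assms(3) e by (auto simp: oocf_B_def simp del: of_nat_add of_nat_Suc)
  have r1: "(real k-1)/real k \<in> \<rat>" "(2*real k-1)/(2*real k+1) \<in> \<rat>" by simp_all
  have s: "(real k-1)/real k < y" "y < (2*real k-1)/(2*real k+1)"
    using b r1 assms(2) by (metis order_le_less)+
  show ?thesis using T_minus[OF assms] minus_props[of "real k" y] s assms by simp
qed

lemma T_preserve:
  assumes "0 < y" "y < 1" "y \<notin> \<rat>"
  shows "0 < oocf_T y \<and> oocf_T y < 1 \<and> oocf_T y \<notin> \<rat>"
proof -
  obtain d where d: "d \<in> oocf_D" "y \<in> oocf_B d" using B_exists[OF assms(1,2)] by blast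
  show ?thesis using d(1)
  proof (cases rule: D_cases)
    case 1 then show ?thesis using plus_case[of 1 y] d assms by simp
  next
    case (2 a)
    then have "a = (a - 1) + 1" by simp
    then have "y \<in> oocf_B ((a-1)+1, -1)" using d 2 by simp
    then show ?thesis using minus_case[of "a-1" y] 2 assms by simp
  next
    case (3 a) then show ?thesis using plus_case[of a y] d assms by simp
  qed
qed

lemma orbit:
  assumes "0 < x" "x < 1" "x \<notin> \<rat>"
  shows "0 < (oocf_T ^^ n) x \<and> (oocf_T ^^ n) x < 1 \<and> (oocf_T ^^ n) x \<notin> \<rat>"
proof (induction n)
  case 0 then show ?case using assms by simp
next
  case (Suc n) then show ?case using T_preserve by simp
qed

lemma expansion_eq:
  assumes "0 < x" "x < 1" "x \<notin> \<rat>" "d \<in> oocf_D" "(oocf_T ^^ j) x \<in> oocf_B d"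
  shows "oocf_expansion x j = d"
proof -
  define s where "s n = (SOME d. d \<in> oocf_D \<and> (oocf_T ^^ n) x \<in> oocf_B d)" for n
  have sP: "s n \<in> oocf_D \<and> (oocf_T ^^ n) x \<in> oocf_B (s n)" for n
  proof -
    have "\<exists>d\<in>oocf_D. (oocf_T ^^ n) x \<in> oocf_B d" using B_exists orbit[OF assms(1-3)] by blast
    then show ?thesis unfolding s_def by (rule someI2_bex) blast
  qed
  have "oocf_expansion x = s"
    unfolding oocf_expansion_def
  proof (rule the_equality)
    show "\<forall>n. s n \<in> oocf_D \<and> (oocf_T ^^ n) x \<in> oocf_B (s n)" using sP by blast
  next
    fix t assume t: "\<forall>n. t n \<in> oocf_D \<and> (oocf_T ^^ n) x \<in> oocf_B (t n)"
    show "t = s"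
    proof
      fix n show "t n = s n" using B_unique[of "(oocf_T ^^ n) x"] orbit[OF assms(1-3)] t sP by blast
    qed
  qed
  then show ?thesis using B_unique[of "(oocf_T ^^ j) x"] orbit[OF assms(1-3)] sP assms(4,5) by blast
qed




lemma iter_two:
  assumes "0 < x" "x < 1" "x \<notin> \<rat>" "1/x - 2 * real j > 1"
  shows "(oocf_T ^^ j) x = 1 / (1/x - 2 * real j)"
  using assms(4)
proof (induction j)
  case 0 then show ?case by simp
next
  case (Suc j)
  define w where "w = 1/x - 2 * real j"
  have w3: "w > 3" using Suc.prems unfolding w_def by simp
  have z: "(oocf_T ^^ j) x = 1/w" using Suc unfolding w_def by simp
  have zq: "1/w \<notin> \<rat>" using orbit[OF assms(1-3), of j] z by simp
  have zB: "1/w \<in> oocf_B (1+1, -1)" using w3 by (simp add: oocf_B_def field_simps)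
  have "oocf_T (1/w) = (1 * (1/w) - (1 - 1)) / (1 - (1 + 1) * (1/w))"
    using T_minus[OF _ zq zB] by simp
  also have "\<dots> = 1 / (w - 2)" using w3 by (simp add: field_simps)
  finally show ?case using z unfolding w_def by (simp add: algebra_simps)
qed

lemma digit_two:
  assumes "0 < x" "x < 1" "x \<notin> \<rat>" "1/x - 2 * real j > 3"
  shows "oocf_expansion x j = (2, -1)"
proof -
  have "(oocf_T ^^ j) x = 1 / (1/x - 2 * real j)" using iter_two assms by simp
  moreover have "1 / (1/x - 2 * real j) \<in> oocf_B (2, -1)" using assms(4)
    by (simp add: oocf_B_def field_simps)
  moreover have "(2, -1) \<in> oocf_D" by (simp add: oocf_D_def)
  ultimately show ?thesis using expansion_eq assms(1-3) by metis
qed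

lemma test1: "cf_digit x 2 = nat \<lfloor>1 / gauss_map x\<rfloor>" by (simp add: cf_digit_def)
lemma test2: "(gauss_map ^^ 2) x = gauss_map (gauss_map x)" by (simp add: numeral_2_eq_2)




theorem theorem5p3:
  fixes x :: real
  assumes "0 < x" and "x < 1" and "x \<notin> \<rat>"
  shows
   "(odd (cf_digit x 1) \<and> (gauss_map ^^ 2) x \<in> {1/2 ..< 1} \<longrightarrow>
       (\<forall>j < (cf_digit x 1 - 1) div 2. oocf_expansion x j = (2, -1)) \<and>
       oocf_expansion x ((cf_digit x 1 - 1) div 2) = (cf_digit x 2 + 1, 1) \<and>
       (oocf_T ^^ ((cf_digit x 1 - 1) div 2 + 1)) x = farey_map ((gauss_map ^^ 2) x))
  \<and> (odd (cf_digit x 1) \<and> (gauss_map ^^ 2) x \<in> {0 ..< 1/2} \<longrightarrow>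
       (\<forall>j < (cf_digit x 1 - 1) div 2. oocf_expansion x j = (2, -1)) \<and>
       oocf_expansion x ((cf_digit x 1 - 1) div 2) = (cf_digit x 2 + 2, -1) \<and>
       (oocf_T ^^ ((cf_digit x 1 - 1) div 2 + 1)) x = farey_map ((gauss_map ^^ 2) x))
  \<and> (even (cf_digit x 1) \<longrightarrow>
       (\<forall>j < cf_digit x 1 div 2 - 1. oocf_expansion x j = (2, -1)) \<and>
       oocf_expansion x (cf_digit x 1 div 2 - 1) = (1, 1) \<and>
       (oocf_T ^^ (cf_digit x 1 div 2)) x = gauss_map x)"
proof -
  define d1 where "d1 = cf_digit x 1"
  define g where "g = gauss_map x"
  define d2 where "d2 = cf_digit x 2"
  define t where "t = (gauss_map ^^ 2) x"
  have ix: "1/x \<notin> \<rat>" using assms(3) by (metis Rats_inverse inverse_eq_divide inverse_inverse_eq)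
  have ix1: "1/x > 1" using assms(1,2) by simp
  have fl1: "\<lfloor>1/x\<rfloor> \<ge> 1" using ix1 by linarith
  have d1r: "real d1 = \<lfloor>1/x\<rfloor>" unfolding d1_def cf_digit_def
    by (simp, rule of_nat_nat) (use fl1 in linarith)
  have d1ge: "d1 \<ge> 1" using d1r fl1 by linarith
  have gdef: "g = 1/x - real d1" unfolding g_def gauss_map_def frac_def using assms(1) d1r by simp
  have gne: "1/x \<noteq> real d1" using ix by (metis Rats_of_nat)
  have g0: "0 < g" "g < 1" using gdef d1r gne by linarith+
  have gq: "g \<notin> \<rat>" using gdef ix by (metis Rats_add Rats_of_nat diff_add_cancel)
  have ig: "1/g \<notin> \<rat>" using gq by (metis Rats_inverse inverse_eq_divide inverse_inverse_eq)
  have ig1: "1/g > 1" using g0 by simp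
  have fl2: "\<lfloor>1/g\<rfloor> \<ge> 1" using ig1 by linarith
  have d2r: "real d2 = \<lfloor>1/g\<rfloor>" unfolding d2_def cf_digit_def g_def
    by (simp, rule of_nat_nat) (use fl2 g0 in \<open>simp add: g_def\<close>)
  have d2ge: "d2 \<ge> 1" using d2r fl2 by linarith
  have "t = gauss_map g" unfolding t_def g_def by (simp add: numeral_2_eq_2)
  then have tdef: "t = 1/g - real d2" using g0 d2r by (simp add: gauss_map_def frac_def)
  have gne2: "1/g \<noteq> real d2" using ig by (metis Rats_of_nat)
  have t0: "0 < t" "t < 1" using tdef d2r gne2 by linarith+
  have tq: "t \<notin> \<rat>" using tdef ig by (metis Rats_add Rats_of_nat diff_add_cancel)
  have gt: "g = 1 / (real d2 + t)" using tdef g0 by simp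
  have th1: "odd d1 \<and> t \<in> {1/2 ..< 1} \<longrightarrow>
       (\<forall>j < (d1 - 1) div 2. oocf_expansion x j = (2, -1)) \<and>
       oocf_expansion x ((d1 - 1) div 2) = (d2 + 1, 1) \<and>
       (oocf_T ^^ ((d1 - 1) div 2 + 1)) x = farey_map t"
  proof
    assume od: "odd d1 \<and> t \<in> {1/2 ..< 1}"
    then obtain m where m: "d1 = 2*m+1" by (meson oddE)
    have md: "(d1 - 1) div 2 = m" using m by simp
    have ixe: "1/x = 2 * real m + 1 + g" using gdef m by simp
    have A: "\<forall>j < m. oocf_expansion x j = (2, -1)"
    proof (intro allI impI)
      fix j assume "j < m"
      then have "real j + 1 \<le> real m" by simp
      then have "1/x - 2 * real j > 3" using ixe g0 by linarith
      then show "oocf_expansion x j = (2, -1)" using digit_two assms by blast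
    qed
    define D where "D = real d2"
    have D1: "D \<ge> 1" using d2ge unfolding D_def by simp
    have y0: "(oocf_T ^^ m) x = 1/(1+g)" using iter_two[OF assms, of m] ixe g0 by simp
    have gD: "g = 1/(D+t)" using gt unfolding D_def .
    have "1/(1+1/(D+t)) = (D+t)/(D+t+1)" using t0 D1 by (simp add: field_simps)
    then have "1/(1+g) = (D+t)/(D+t+1)" using gD by simp
    then have y: "(oocf_T ^^ m) x = (D+t)/(D+t+1)" using y0 by simp
    have yq: "(D+t)/(D+t+1) \<notin> \<rat>" using orbit[OF assms, of m] y by simp
    have Sp: "D+t+1 > 0" using t0 D1 by simp
    have nn: "(D+1) - ((D+1) + 1) * ((D+t)/(D+t+1)) = (1-t)/(D+t+1)" using Sp by (simp add: field_simps)
    have dd: "(D+1) * ((D+t)/(D+t+1)) - ((D+1) - 1) = t/(D+t+1)" using Sp by (simp add: field_simps)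
    have tq2: "t \<noteq> 1/2"
    proof
      assume h: "t = 1/2"
      have "(1/2::real) \<in> \<rat>" by simp
      then show False using tq h by metis
    qed
    have th: "t > 1/2" using od tq2 by auto
    have yB: "(D+t)/(D+t+1) \<in> oocf_B (d2+1, 1)"
      using th t0 D1 unfolding D_def by (simp add: oocf_B_def field_simps)
    have Dd: "(d2+1,1) \<in> oocf_D" using d2ge by (simp add: oocf_D_def)
    have B: "oocf_expansion x m = (d2+1,1)" using expansion_eq[OF assms Dd] y yB by simp
    have "oocf_T ((D+t)/(D+t+1)) = ((D+1) - ((D+1) + 1) * ((D+t)/(D+t+1))) / ((D+1) * ((D+t)/(D+t+1)) - ((D+1) - 1))"
      using T_plus[OF _ yq yB] unfolding D_def by (simp add: ac_simps)
    also have "\<dots> = (1-t)/t" unfolding nn dd using Sp by simp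
    also have "\<dots> = farey_map t" using th by (simp add: farey_map_def)
    finally have C: "(oocf_T ^^ (m+1)) x = farey_map t" using y by simp
    show "(\<forall>j < (d1 - 1) div 2. oocf_expansion x j = (2, -1)) \<and>
       oocf_expansion x ((d1 - 1) div 2) = (d2 + 1, 1) \<and>
       (oocf_T ^^ ((d1 - 1) div 2 + 1)) x = farey_map t" using A B C md by simp
  qed
  have th2: "odd d1 \<and> t \<in> {0 ..< 1/2} \<longrightarrow>
       (\<forall>j < (d1 - 1) div 2. oocf_expansion x j = (2, -1)) \<and>
       oocf_expansion x ((d1 - 1) div 2) = (d2 + 2, -1) \<and>
       (oocf_T ^^ ((d1 - 1) div 2 + 1)) x = farey_map t"
  proof
    assume od: "odd d1 \<and> t \<in> {0 ..< 1/2}"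
    then obtain m where m: "d1 = 2*m+1" by (meson oddE)
    have md: "(d1 - 1) div 2 = m" using m by simp
    have ixe: "1/x = 2 * real m + 1 + g" using gdef m by simp
    have A: "\<forall>j < m. oocf_expansion x j = (2, -1)"
    proof (intro allI impI)
      fix j assume "j < m"
      then have "real j + 1 \<le> real m" by simp
      then have "1/x - 2 * real j > 3" using ixe g0 by linarith
      then show "oocf_expansion x j = (2, -1)" using digit_two assms by blast
    qed
    define D where "D = real d2"
    have D1: "D \<ge> 1" using d2ge unfolding D_def by simp
    have y0: "(oocf_T ^^ m) x = 1/(1+g)" using iter_two[OF assms, of m] ixe g0 by simp
    have gD: "g = 1/(D+t)" using gt unfolding D_def .
    have "1/(1+1/(D+t)) = (D+t)/(D+t+1)" using t0 D1 by (simp add: field_simps)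
    then have "1/(1+g) = (D+t)/(D+t+1)" using gD by simp
    then have y: "(oocf_T ^^ m) x = (D+t)/(D+t+1)" using y0 by simp
    have yq: "(D+t)/(D+t+1) \<notin> \<rat>" using orbit[OF assms, of m] y by simp
    have Sp: "D+t+1 > 0" using t0 D1 by simp
    have nn: "(D+1) - ((D+1) + 1) * ((D+t)/(D+t+1)) = (1-t)/(D+t+1)" using Sp by (simp add: field_simps)
    have dd: "(D+1) * ((D+t)/(D+t+1)) - ((D+1) - 1) = t/(D+t+1)" using Sp by (simp add: field_simps)
    have tq2: "t \<noteq> 1/2"
    proof
      assume h: "t = 1/2"
      have "(1/2::real) \<in> \<rat>" by simp
      then show False using tq h by metis
    qed
    have th: "t < 1/2" using od by auto
    have yB: "(D+t)/(D+t+1) \<in> oocf_B ((d2+1)+1, -1)"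
      using th t0 D1 unfolding D_def by (simp add: oocf_B_def field_simps)
    have Dd: "((d2+1)+1,-1) \<in> oocf_D" using d2ge by (simp add: oocf_D_def)
    have B: "oocf_expansion x m = ((d2+1)+1,-1)" using expansion_eq[OF assms Dd] y yB by simp
    have "oocf_T ((D+t)/(D+t+1)) = ((D+1) * ((D+t)/(D+t+1)) - ((D+1) - 1)) / ((D+1) - ((D+1) + 1) * ((D+t)/(D+t+1)))"
      using T_minus[OF _ yq yB] unfolding D_def by (simp add: ac_simps)
    also have "\<dots> = t/(1-t)" unfolding nn dd using Sp by simp
    also have "\<dots> = farey_map t" using th by (simp add: farey_map_def)
    finally have C: "(oocf_T ^^ (m+1)) x = farey_map t" using y by simp
    show "(\<forall>j < (d1 - 1) div 2. oocf_expansion x j = (2, -1)) \<and>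
       oocf_expansion x ((d1 - 1) div 2) = (d2 + 2, -1) \<and>
       (oocf_T ^^ ((d1 - 1) div 2 + 1)) x = farey_map t" using A B C md by simp
  qed
  have th3: "even d1 \<longrightarrow>
       (\<forall>j < d1 div 2 - 1. oocf_expansion x j = (2, -1)) \<and>
       oocf_expansion x (d1 div 2 - 1) = (1, 1) \<and>
       (oocf_T ^^ (d1 div 2)) x = g"
  proof
    assume ev: "even d1"
    then obtain k where k: "d1 = 2*k" by (rule evenE)
    then have "k \<ge> 1" using d1ge by simp
    define m where "m = k - 1"
    have m: "d1 = 2*m+2" using k \<open>k \<ge> 1\<close> unfolding m_def by simp
    have md: "d1 div 2 - 1 = m" "d1 div 2 = m + 1" using m by simp_all
    have ixe: "1/x = 2 * real m + 2 + g" using gdef m by simp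
    have A: "\<forall>j < m. oocf_expansion x j = (2, -1)"
    proof (intro allI impI)
      fix j assume "j < m"
      then have "real j + 1 \<le> real m" by simp
      then have "1/x - 2 * real j > 3" using ixe g0 by linarith
      then show "oocf_expansion x j = (2, -1)" using digit_two assms by blast
    qed
    have y: "(oocf_T ^^ m) x = 1/(2+g)" using iter_two[OF assms, of m] ixe g0 by simp
    have yq: "1/(2+g) \<notin> \<rat>" using orbit[OF assms, of m] y by simp
    have yB: "1/(2+g) \<in> oocf_B (1, 1)" using g0 by (simp add: oocf_B_def field_simps)
    have D11: "(1,1) \<in> oocf_D" by (simp add: oocf_D_def)
    have B: "oocf_expansion x m = (1,1)" using expansion_eq[OF assms D11] y yB by simp
    have "oocf_T (1/(2+g)) = (1 - (1 + 1) * (1/(2+g))) / (1 * (1/(2+g)) - (1 - 1))"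
      using T_plus[OF _ yq yB] by simp
    also have "\<dots> = g" using g0 by (simp add: field_simps)
    finally have C: "(oocf_T ^^ (m+1)) x = g" using y by simp
    show "(\<forall>j < d1 div 2 - 1. oocf_expansion x j = (2, -1)) \<and>
       oocf_expansion x (d1 div 2 - 1) = (1, 1) \<and>
       (oocf_T ^^ (d1 div 2)) x = g" using A B C md by simp
  qed
  show ?thesis using th1 th2 th3 unfolding d1_def d2_def t_def g_def by blast
qed


end
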